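(* Let $\mathcal{N}>0$ be real, $n\ge0$ an integer, and put $\nu=\mathcal{N}+\tfrac12-n$. Then \[ \mathcal{H}_{n}^{\mathcal{N}}\!\left(X\sqrt{\mathcal{N}}\right)=\alpha_{n,\nu}\,n!\left(\frac{\nu}{\mathcal{N}}\right)^{\frac{n}{2}}\left(1+X^{2}\right)^{\frac{n}{2}}\,\mathcal{C}_{n}^{\nu}\!\left(\frac{X\sqrt{\nu}}{\sqrt{1+X^{2}}}\right), \qquad \alpha_{n,\nu}=\frac{(2\nu)_n}{2^n\,n!\,(\nu+\frac12)_n}. \]
   Context: $(a)_n=a(a+1)\cdots(a+n-1)$ denotes the Pochhammer symbol. For $\mathcal{N}>0$ and integer $n\ge0$, the Cari\~{n}ena polynomial with positive parameter is \[ \mathcal{H}_n^{\mathcal{N}}(X)=(-1)^n\left(1+\frac{X^2}{\mathcal{N}}\right)^{\mathcal{N}+\frac12}\frac{d^n}{dX^n}\left(1+\frac{X^2}{\mathcal{N}}\right)^{n-\mathcal{N}-\frac12}. \] For a real parameter $\nu\neq0$, the Cari\~{n}ena polynomial with parameter $-\nu$ is \[ \mathcal{C}_n^{\nu}(X)=(-1)^n\left(1-\frac{X^2}{\nu}\right)^{\frac12-\nu}\frac{d^n}{dX^n}\left(1-\frac{X^2}{\nu}\right)^{n+\nu-\frac12}. \] Both sides of the claimed identity are regarded as functions (polynomial expressions) in $X$. *)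

theory Defs
  imports "HOL-Analysis.Analysis" "HOL-Computational_Algebra.Polynomial"
begin

definition carinena_H :: "nat \<Rightarrow> real \<Rightarrow> real \<Rightarrow> real" where
  "carinena_H n N X = (-1) ^ n * (1 + X\<^sup>2 / N) powr (N + 1/2)
     * (deriv ^^ n) (\<lambda>t. (1 + t\<^sup>2 / N) powr (real n - N - 1/2)) X"

text \<open>Carinena polynomial with parameter -nu (as a real function of X, meaningful where
  1 - X^2/nu > 0).\<close>
definition carinena_C :: "nat \<Rightarrow> real \<Rightarrow> real \<Rightarrow> real" where
  "carinena_C n \<nu> X = (-1) ^ n * (1 - X\<^sup>2 / \<nu>) powr (1/2 - \<nu>)
     * (deriv ^^ n) (\<lambda>t. (1 - t\<^sup>2 / \<nu>) powr (real n + \<nu> - 1/2)) X"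

text \<open>The polynomial expression of carinena_C: the polynomial agreeing with it on its
  natural domain {Y. 1 - Y^2/nu > 0} (an infinite set when nu is nonzero).\<close>
definition carinena_C_poly :: "nat \<Rightarrow> real \<Rightarrow> real poly" where
  "carinena_C_poly n \<nu> = (THE p. \<forall>Y. 0 < 1 - Y\<^sup>2 / \<nu> \<longrightarrow> poly p Y = carinena_C n \<nu> Y)"

definition carinena_alpha :: "nat \<Rightarrow> real \<Rightarrow> real" where
  "carinena_alpha n \<nu> = pochhammer (2 * \<nu>) n / (2 ^ n * fact n * pochhammer (\<nu> + 1/2) n)"

end

theory Submission
  imports Defs
begin

definition XX :: "'a::idom poly" where "XX = [:0,1:]"
definition KK :: "'a::idom \<Rightarrow> 'a poly" where "KK a = [:a:]"

lemma pderiv_XX [simp]: "pderiv (XX :: 'a::idom poly) = 1"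
  by (simp add: pderiv_pCons XX_def)
lemma pderiv_KK [simp]: "pderiv (KK a) = 0"
  by (simp add: KK_def)
lemma KK_add: "KK (a + b) = KK a + KK b" by (simp add: KK_def)
lemma KK_diff: "KK (a - b) = KK a - KK b" by (simp add: KK_def)
lemma KK_mult: "KK (a * b) = KK a * KK b" by (simp add: KK_def)
lemma KK_1: "KK 1 = 1" by (simp add: KK_def one_pCons)
lemma KK_0: "KK 0 = 0" by (simp add: KK_def)
lemma KK_of_nat: "KK (of_nat n) = of_nat n" by (simp add: KK_def of_nat_poly)
lemma KK_numeral: "KK (numeral n) = numeral n" by (simp add: KK_def numeral_poly)

fun Rc :: "'a::idom \<Rightarrow> 'a \<Rightarrow> nat \<Rightarrow> 'a poly" where
  "Rc c a 0 = 1"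
| "Rc c a (Suc n) = (1 + KK c * XX * XX) * pderiv (Rc c a n)
      + 2 * KK c * (KK a - of_nat n) * XX * Rc c a n"

fun hh :: "'a::idom \<Rightarrow> nat \<Rightarrow> 'a poly" where
  "hh N 0 = 1"
| "hh N (Suc n) = (1 + XX * XX) * pderiv (hh N n) + (of_nat n - 2 * KK N) * XX * hh N n"

lemmas pd = pderiv_mult pderiv_add pderiv_diff pderiv_XX pderiv_KK pderiv_of_nat pderiv_1 pderiv_0
   pderiv_numeral

lemma R2:
  fixes a :: "'a::idom"
  shows "Rc 1 a (Suc (Suc n)) = 2 * KK a * XX * Rc 1 (a - 1) (Suc n)
          + 2 * KK a * of_nat (Suc n) * (1 + XX * XX) * Rc 1 (a - 1) n"
proof (induction n)
  case 0
  show ?case by (simp only: Rc.simps pd KK_1 KK_diff of_nat_0 of_nat_Suc) algebra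
next
  case (Suc n)
  define g0 where "g0 = Rc 1 (a-1) n"
  define g1 where "g1 = Rc 1 (a-1) (Suc n)"
  have e1: "g1 = (1 + XX * XX) * pderiv g0 + 2 * (KK a - 1 - of_nat n) * XX * g0"
    by (simp only: g0_def g1_def Rc.simps KK_diff KK_1) algebra
  have e2: "Rc 1 (a-1) (Suc (Suc n)) = (1 + XX * XX) * pderiv g1 + 2 * (KK a - 1 - of_nat (Suc n)) * XX * g1"
    by (simp only: g1_def Rc.simps KK_diff KK_1) algebra
  have IH: "Rc 1 a (Suc (Suc n)) = 2 * KK a * XX * g1 + 2 * KK a * of_nat (Suc n) * (1 + XX * XX) * g0"
    using Suc.IH by (simp add: g0_def g1_def)
  have "Rc 1 a (Suc (Suc (Suc n))) = (1 + XX * XX) * pderiv (Rc 1 a (Suc (Suc n)))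
      + 2 * (KK a - of_nat (Suc (Suc n))) * XX * Rc 1 a (Suc (Suc n))"
    by (simp only: Rc.simps KK_1) algebra
  also have "\<dots> = 2 * KK a * XX * Rc 1 (a - 1) (Suc (Suc n))
          + 2 * KK a * of_nat (Suc (Suc n)) * (1 + XX * XX) * g1"
    unfolding IH e2
    apply (simp only: pd of_nat_Suc)
    using e1 by algebra
  finally show ?case by (simp add: g1_def)
qed

lemma R3:
  fixes a :: "'a::idom"
  shows "Rc 1 a (Suc (Suc m)) = - 2 * (of_nat m + 1 - KK a) * XX * Rc 1 a (Suc m)
          - (of_nat m + 1) * (of_nat m - 2 * KK a) * (1 + XX * XX) * Rc 1 a m"
proof (induction m)
  case 0
  show ?case by (simp only: Rc.simps pd KK_1 of_nat_0 of_nat_Suc) algebra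
next
  case (Suc m)
  define g0 where "g0 = Rc 1 a m"
  define g1 where "g1 = Rc 1 a (Suc m)"
  define g2 where "g2 = Rc 1 a (Suc (Suc m))"
  have d0: "g1 = (1 + XX * XX) * pderiv g0 + 2 * (KK a - of_nat m) * XX * g0"
    by (simp only: g0_def g1_def Rc.simps KK_1) algebra
  have d1: "g2 = (1 + XX * XX) * pderiv g1 + 2 * (KK a - of_nat (Suc m)) * XX * g1"
    by (simp only: g2_def g1_def Rc.simps KK_1) algebra
  have d2: "Rc 1 a (Suc (Suc (Suc m))) = (1 + XX * XX) * pderiv g2 + 2 * (KK a - of_nat (Suc (Suc m))) * XX * g2"
    by (simp only: g2_def Rc.simps KK_1) algebra
  have IH: "g2 = - 2 * (of_nat m + 1 - KK a) * XX * g1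
          - (of_nat m + 1) * (of_nat m - 2 * KK a) * (1 + XX * XX) * g0"
    using Suc.IH by (simp add: g0_def g1_def g2_def)
  have dd: "pderiv g2 = pderiv (- 2 * (of_nat m + 1 - KK a) * XX * g1
          - (of_nat m + 1) * (of_nat m - 2 * KK a) * (1 + XX * XX) * g0)"
    using IH by simp
  have dd': "pderiv g2 = - 2 * (of_nat m + 1 - KK a) * (g1 + XX * pderiv g1)
          - (of_nat m + 1) * (of_nat m - 2 * KK a) * (2 * XX * g0 + (1 + XX * XX) * pderiv g0)"
    unfolding dd by (simp only: pd pderiv_minus) algebra
  define E :: "'a poly" where "E = 1 + XX * XX"
  have comb: "Rc 1 a (Suc (Suc (Suc m))) - (- 2 * (of_nat (Suc m) + 1 - KK a) * XX * g2
          - (of_nat (Suc m) + 1) * (of_nat (Suc m) - 2 * KK a) * E * g1)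
     = (Rc 1 a (Suc (Suc (Suc m))) - (E * pderiv g2 + 2 * (KK a - of_nat (Suc (Suc m))) * XX * g2))
       + E * (pderiv g2 - (- 2 * (of_nat m + 1 - KK a) * (g1 + XX * pderiv g1)
          - (of_nat m + 1) * (of_nat m - 2 * KK a) * (2 * XX * g0 + E * pderiv g0)))
       + 2 * (of_nat m + 1 - KK a) * XX * (g2 - (E * pderiv g1 + 2 * (KK a - of_nat (Suc m)) * XX * g1))
       + (of_nat m + 1) * (of_nat m - 2 * KK a) * E * (g1 - (E * pderiv g0 + 2 * (KK a - of_nat m) * XX * g0))
       - (2 * of_nat m + 2 - 2 * KK a) * XX * (g2 - (- 2 * (of_nat m + 1 - KK a) * XX * g1
          - (of_nat m + 1) * (of_nat m - 2 * KK a) * E * g0))"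
    by (simp only: of_nat_Suc) algebra
  have "Rc 1 a (Suc (Suc (Suc m))) - (- 2 * (of_nat (Suc m) + 1 - KK a) * XX * g2
          - (of_nat (Suc m) + 1) * (of_nat (Suc m) - 2 * KK a) * E * g1) = 0"
    unfolding comb using d2 dd' d1 d0 IH by (simp add: E_def)
  thus ?case by (simp add: E_def g1_def g2_def)
qed

lemma R4:
  fixes a :: "'a::idom"
  shows "(of_nat (Suc k) - 2 * KK a - 2) * Rc 1 (a + 1) (Suc k) + 2 * (KK a + 1) * Rc 1 a (Suc k)
     + 2 * (KK a + 1) * of_nat (Suc k) * XX * Rc 1 a k = 0"
proof (cases k)
  case 0
  show ?thesis unfolding 0 by (simp only: Rc.simps pd KK_1 KK_add of_nat_0 of_nat_Suc) algebra
next
  case (Suc j)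
  have r2: "Rc 1 (a + 1) (Suc (Suc j)) = 2 * KK (a + 1) * XX * Rc 1 a (Suc j)
          + 2 * KK (a + 1) * of_nat (Suc j) * (1 + XX * XX) * Rc 1 a j"
    using R2[of "a + 1" j] by simp
  show ?thesis unfolding Suc
    apply (subst r2)
    apply (subst R3)
    by (simp only: KK_add KK_1 of_nat_Suc) algebra
qed

lemma Arec:
  fixes b N :: "'a::idom"
  assumes hb: "2 * b = 2 * N + 1"
  shows "(2 * KK N - of_nat n) * Rc 1 (of_nat (Suc n) - b) (Suc n)
    = (2 * KK N - 2 * of_nat n - 1) * ((1 + XX * XX) * pderiv (Rc 1 (of_nat n - b) n)
        + (of_nat n - 2 * KK N) * XX * Rc 1 (of_nat n - b) n)"
proof -
  define a where "a = of_nat n - b"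
  have ea: "of_nat (Suc n) - b = a + 1" by (simp add: a_def)
  have hb': "2 * KK b = 2 * KK N + 1" using arg_cong[OF hb, of KK] by (simp add: KK_add KK_mult KK_1 KK_numeral)
  have hk: "KK a = of_nat n - KK b" by (simp add: a_def KK_diff KK_of_nat)
  have r4: "(of_nat (Suc n) - 2 * KK a - 2) * Rc 1 (a + 1) (Suc n) + 2 * (KK a + 1) * Rc 1 a (Suc n)
     + 2 * (KK a + 1) * of_nat (Suc n) * XX * Rc 1 a n = 0" by (rule R4)
  have d: "Rc 1 a (Suc n) = (1 + XX * XX) * pderiv (Rc 1 a n) + 2 * (KK a - of_nat n) * XX * Rc 1 a n"
    by (simp only: Rc.simps KK_1) algebra
  have r4': "(of_nat (Suc n) - 2 * KK a - 2) * Rc 1 (a + 1) (Suc n) + 2 * (KK a + 1) * ((1 + XX * XX) * pderiv (Rc 1 a n) + 2 * (KK a - of_nat n) * XX * Rc 1 a n)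
     + 2 * (KK a + 1) * of_nat (Suc n) * XX * Rc 1 a n = 0" using r4 unfolding d .
  show ?thesis unfolding ea a_def[symmetric]
    using r4' hb' unfolding hk by (simp only: of_nat_Suc) algebra
qed

lemma Dn:
  fixes b N :: "'a::idom"
  assumes hb: "2 * b = 2 * N + 1"
    and hN: "\<And>k. 2 * N \<noteq> of_nat k"
  shows "KK (2 ^ n * pochhammer (N + 1 - of_nat n) n) * Rc 1 (of_nat n - b) n
       = KK (pochhammer (2 * N + 1 - 2 * of_nat n) n) * hh N n"
proof (induction n)
  case 0
  show ?case by (simp add: KK_1)
next
  case (Suc n)
  define A where "A = Rc 1 (of_nat n - b) n"
  define P where "P = 2 ^ n * pochhammer (N + 1 - of_nat n) n"
  define Q where "Q = pochhammer (2 * N + 1 - 2 * of_nat n) n"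
  have IH: "KK P * A = KK Q * hh N n" using Suc.IH by (simp add: A_def P_def Q_def)
  have ar: "(2 * KK N - of_nat n) * Rc 1 (of_nat (Suc n) - b) (Suc n)
    = (2 * KK N - 2 * of_nat n - 1) * ((1 + XX * XX) * pderiv A + (of_nat n - 2 * KK N) * XX * A)"
    unfolding A_def by (rule Arec[OF hb])
  have dIH: "KK P * pderiv A = KK Q * pderiv (hh N n)"
    using arg_cong[OF IH, of pderiv] by (simp add: pd)
  have p1: "2 ^ Suc n * pochhammer (N + 1 - of_nat (Suc n)) (Suc n) = 2 * (N - of_nat n) * P"
    unfolding P_def by (simp add: pochhammer_rec algebra_simps)
  have p2: "(2 * N - of_nat n) * pochhammer (2 * N + 1 - 2 * of_nat (Suc n)) (Suc n)
      = 2 * (N - of_nat n) * (2 * N - 2 * of_nat n - 1) * Q"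
  proof -
    define x where "x = 2 * N - 2 * of_nat n"
    have e1: "pochhammer x (Suc n) = x * pochhammer (x + 1) n"
      by (rule pochhammer_rec)
    have e2: "pochhammer x (Suc n) = (x + of_nat n) * pochhammer x n"
      by (rule pochhammer_rec')
    have e3: "pochhammer (x - 1) (Suc n) = (x - 1) * pochhammer x n"
      by (subst pochhammer_rec) simp
    have "(x + of_nat n) * pochhammer (x - 1) (Suc n) = x * (x - 1) * pochhammer (x + 1) n"
      using e1 e2 e3 by (metis mult.assoc mult.commute)
    moreover have "2 * N + 1 - 2 * of_nat (Suc n) = x - 1" "2 * N - of_nat n = x + of_nat n"
      "2 * N + 1 - 2 * of_nat n = x + 1" "2 * (N - of_nat n) = x" "2 * N - 2 * of_nat n - 1 = x - 1"
      by (simp_all add: x_def algebra_simps)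
    ultimately show ?thesis unfolding Q_def by (simp add: mult.assoc add.commute)
  qed
  have nz: "2 * KK N - of_nat n \<noteq> (0 :: 'a poly)"
  proof
    assume "2 * KK N - of_nat n = (0 :: 'a poly)"
    hence "KK (2 * N - of_nat n) = KK 0" by (simp add: KK_diff KK_mult KK_numeral KK_of_nat KK_0)
    hence "2 * N - of_nat n = 0" by (simp add: KK_def)
    with hN[of n] show False by simp
  qed
  have "(2 * KK N - of_nat n) * (KK (2 ^ Suc n * pochhammer (N + 1 - of_nat (Suc n)) (Suc n)) * Rc 1 (of_nat (Suc n) - b) (Suc n))
     = (2 * KK N - of_nat n) * (KK (pochhammer (2 * N + 1 - 2 * of_nat (Suc n)) (Suc n)) * hh N (Suc n))"
  proof -
    have k2: "KK ((2 * N - of_nat n) * pochhammer (2 * N + 1 - 2 * of_nat (Suc n)) (Suc n))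
        = KK (2 * (N - of_nat n) * (2 * N - 2 * of_nat n - 1) * Q)" using p2 by simp
    show ?thesis
      unfolding p1 hh.simps
      using ar IH dIH k2
      by (simp only: KK_mult KK_diff KK_numeral KK_of_nat KK_add KK_1) algebra
  qed
  with nz show ?case by simp
qed

lemma KK_smult: "smult k p = KK k * p" by (simp add: KK_def)

lemma pcompose_KK: "pcompose (KK k) q = KK k" by (simp add: KK_def pcompose_pCons)
lemma pcompose_XX: "pcompose XX q = q" by (simp add: XX_def pcompose_pCons)
lemma pcompose_of_nat: "pcompose (of_nat k) q = of_nat k" by (simp add: of_nat_poly pcompose_pCons)
lemma pcompose_num: "pcompose (numeral k) q = numeral k" by (simp add: numeral_poly pcompose_pCons)
lemma sXX: "[:0, s:] = KK s * XX" by (simp add: KK_def XX_def)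

lemma scaling_poly:
  fixes c s :: "'a::idom"
  shows "Rc (c * s^2) a n = KK (s ^ n) * pcompose (Rc c a n) (KK s * XX)"
proof (induction n)
  case 0 show ?case by (simp add: KK_1 pcompose_1)
next
  case (Suc n)
  have d: "pderiv (pcompose (Rc c a n) (KK s * XX)) = KK s * pcompose (pderiv (Rc c a n)) (KK s * XX)"
    by (simp add: pderiv_pcompose pd)
  show ?case
    apply (simp only: Rc.simps(2) Suc.IH)
    apply (simp only: Rc.simps pcompose_add pcompose_mult pcompose_diff pcompose_KK pcompose_XX
        pcompose_of_nat pcompose_1 pcompose_num pd d KK_mult power_Suc power2_eq_square)
    by algebra
qed

lemma scaling_eval:
  fixes c s x :: "'a::idom"
  shows "poly (Rc (c * s^2) a n) x = s ^ n * poly (Rc c a n) (s * x)"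
  by (simp add: scaling_poly poly_pcompose KK_def XX_def mult.commute)

locale rh =
  fixes f :: "'a::idom \<Rightarrow> 'b::idom"
  assumes add: "f (x + y) = f x + f y" and mult: "f (x * y) = f x * f y" and one: "f 1 = 1"
begin
lemma zero: "f 0 = 0" by (metis add add_0 add_cancel_right_right)
lemma diff: "f (x - y) = f x - f y" using add[of "x - y" y] by (simp add: algebra_simps)
lemma ofnat: "f (of_nat k) = of_nat k" by (induction k) (simp_all add: zero add one)
lemma numer: "f (numeral k) = numeral k" using ofnat[of "numeral k"] by simp
lemma fsum: "f (sum g A) = sum (\<lambda>i. f (g i)) A"
  by (induction A rule: infinite_finite_induct) (simp_all add: zero add)
lemma mp_add: "map_poly f (p + q) = map_poly f p + map_poly f q"
  by (rule poly_eqI) (simp add: coeff_map_poly zero add)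
lemma mp_diff: "map_poly f (p - q) = map_poly f p - map_poly f q"
  by (rule poly_eqI) (simp add: coeff_map_poly zero diff)
lemma mp_mult: "map_poly f (p * q) = map_poly f p * map_poly f q"
  by (rule poly_eqI) (simp add: coeff_map_poly zero coeff_mult fsum mult)
lemma mp_pderiv: "map_poly f (pderiv p) = pderiv (map_poly f p)"
  using ofnat[of "Suc _"] by (intro poly_eqI) (simp add: coeff_map_poly zero coeff_pderiv mult)
lemma mp_KK: "map_poly f (KK c) = KK (f c)" by (simp add: KK_def zero map_poly_pCons)
lemma mp_XX: "map_poly f XX = XX" by (simp add: XX_def zero one map_poly_pCons)
lemma mp_1: "map_poly f 1 = 1" by (simp add: one)
lemma mp_ofnat: "map_poly f (of_nat k) = of_nat k" by (simp add: of_nat_poly zero ofnat map_poly_pCons)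
lemma mp_num: "map_poly f (numeral k) = numeral k" by (simp add: numeral_poly zero numer map_poly_pCons)
lemmas mps = mp_add mp_diff mp_mult mp_pderiv mp_KK mp_XX mp_1 mp_ofnat mp_num
lemma mp_Rc: "map_poly f (Rc c a n) = Rc (f c) (f a) n"
  by (induction n) (simp_all only: Rc.simps mps)
lemma mp_hh: "map_poly f (hh N n) = hh (f N) n"
  by (induction n) (simp_all only: hh.simps mps)
lemma poch: "f (pochhammer x n) = pochhammer (f x) n"
  by (induction n) (simp_all add: pochhammer_Suc one mult add ofnat)
end

lemma rh_of_real: "rh (of_real :: real \<Rightarrow> complex)"
  by unfold_locales simp_all

lemma rh_ev: "rh (\<lambda>q :: real poly. poly q x)"
  by unfold_locales simp_all

lemma Dn_real:
  fixes N :: real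
  shows "KK (2 ^ n * pochhammer (N + 1 - of_nat n) n) * Rc 1 (of_nat n - N - 1/2) n
       = KK (pochhammer (2 * N + 1 - 2 * of_nat n) n) * hh N n"
proof -
  define NN :: "real poly" where "NN = [:0, 1:]"
  define bb :: "real poly" where "bb = [:1/2, 1:]"
  have hb: "2 * bb = 2 * NN + 1" by (simp add: NN_def bb_def numeral_poly one_pCons)
  have hN: "2 * NN \<noteq> of_nat k" for k
  proof
    assume "2 * NN = of_nat k"
    hence "coeff (2 * NN) 1 = coeff (of_nat k :: real poly) 1" by simp
    thus False by (simp add: NN_def numeral_poly of_nat_poly)
  qed
  have D: "KK (2 ^ n * pochhammer (NN + 1 - of_nat n) n) * Rc 1 (of_nat n - bb) n
       = KK (pochhammer (2 * NN + 1 - 2 * of_nat n) n) * hh NN n"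
    by (rule Dn[OF hb hN])
  interpret e: rh "\<lambda>q :: real poly. poly q N" by (rule rh_ev)
  have "map_poly (\<lambda>q. poly q N) (KK (2 ^ n * pochhammer (NN + 1 - of_nat n) n) * Rc 1 (of_nat n - bb) n)
     = map_poly (\<lambda>q. poly q N) (KK (pochhammer (2 * NN + 1 - 2 * of_nat n) n) * hh NN n)"
    using D by simp
  thus ?thesis
    by (simp only: e.mps e.mp_Rc e.mp_hh e.poch) (simp add: NN_def bb_def algebra_simps e.poch)
qed

lemma poly_KK [simp]: "poly (KK c) x = c" by (simp add: KK_def)
lemma poly_XX [simp]: "poly XX x = x" by (simp add: XX_def)

lemma poly_Rc_Suc:
  "poly (Rc c a (Suc n)) t = (1 + c * t^2) * poly (pderiv (Rc c a n)) t
      + 2 * c * (a - of_nat n) * t * poly (Rc c a n) t"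
  by (simp add: power2_eq_square)

lemma deriv_Rc:
  fixes c a :: real and S :: "real set"
  assumes S: "open S" and pos: "\<And>t. t \<in> S \<Longrightarrow> 0 < 1 + c * t^2"
  shows "t \<in> S \<Longrightarrow> (deriv ^^ n) (\<lambda>t. (1 + c * t^2) powr a) t
           = poly (Rc c a n) t * (1 + c * t^2) powr (a - real n)"
proof (induction n arbitrary: t)
  case 0 show ?case by simp
next
  case (Suc n)
  define g where "g = (\<lambda>t. poly (Rc c a n) t * (1 + c * t^2) powr (a - real n))"
  have ev: "eventually (\<lambda>x. (deriv ^^ n) (\<lambda>t. (1 + c * t^2) powr a) x = g x) (nhds t)"
    using eventually_nhds_in_open[OF S Suc.prems] by eventually_elim (simp add: Suc.IH g_def)
  have "(deriv ^^ Suc n) (\<lambda>t. (1 + c * t^2) powr a) t = deriv g t"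
    by (simp add: deriv_cong_ev[OF ev refl])
  also have "deriv g t = poly (pderiv (Rc c a n)) t * (1 + c * t^2) powr (a - real n)
      + poly (Rc c a n) t * ((a - real n) * (1 + c * t^2) powr (a - real n - of_nat 1) * (2 * c * t))"
  proof (rule DERIV_imp_deriv)
    have d1: "((\<lambda>t. 1 + c * t^2) has_real_derivative (2 * c * t)) (at t)"
      by (auto intro!: derivative_eq_intros)
    show "(g has_real_derivative (poly (pderiv (Rc c a n)) t * (1 + c * t^2) powr (a - real n)
      + poly (Rc c a n) t * ((a - real n) * (1 + c * t^2) powr (a - real n - of_nat 1) * (2 * c * t)))) (at t)"
      unfolding g_def
      by (rule DERIV_cong[OF DERIV_mult[OF poly_DERIV DERIV_fun_powr[OF d1 pos[OF Suc.prems]]]]) simp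
  qed
  also have "\<dots> = poly (Rc c a (Suc n)) t * (1 + c * t^2) powr (a - real (Suc n))"
  proof -
    define u where "u = 1 + c * t^2"
    have u: "u > 0" using pos[OF Suc.prems] by (simp add: u_def)
    have e: "u powr (a - real n) = u * u powr (a - real (Suc n))"
    proof -
      have "u * u powr (a - real (Suc n)) = u powr 1 * u powr (a - real (Suc n))" using u by simp
      also have "\<dots> = u powr (1 + (a - real (Suc n)))" by (rule powr_add[symmetric])
      finally show ?thesis by simp
    qed
    show ?thesis unfolding poly_Rc_Suc u_def[symmetric] e
      by (simp add: algebra_simps u_def)
  qed
  finally show ?case .
qed

lemma dr: "((\<lambda>X::real. sqrt (1 + X^2)) has_real_derivative X / sqrt (1 + X^2)) (at X)"
proof -
  have p: "0 < 1 + X^2" by (simp add: add_pos_nonneg)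
  have d2: "((\<lambda>X::real. 1 + X^2) has_real_derivative 2 * X) (at X)"
    by (auto intro!: derivative_eq_intros)
  show ?thesis
    by (rule DERIV_cong[OF DERIV_chain2[of sqrt "inverse (sqrt (1+X^2))/2" "\<lambda>X. 1+X^2" X "2*X", OF DERIV_real_sqrt[OF p] d2]])
      (simp add: field_simps)
qed

lemma dy: "((\<lambda>X::real. X / sqrt (1 + X^2)) has_real_derivative 1 / sqrt (1 + X^2) ^ 3) (at X)"
proof -
  define r where "r = sqrt (1 + X^2)"
  have p: "0 < r" by (simp add: add_pos_nonneg r_def)
  have s2: "X * X = r * r - 1" by (simp add: add_pos_nonneg r_def power2_eq_square[symmetric])
  have "(1 * r - X * (X / r)) / (r * r) = (r * r - X * X) / (r * r * r)"
    using p by (simp add: field_simps)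
  also have "\<dots> = 1 / r ^ 3" unfolding s2 by (simp add: power3_eq_cube)
  finally have eq: "(1 * r - X * (X / r)) / (r * r) = 1 / r ^ 3" .
  show ?thesis
    by (rule DERIV_cong[OF DERIV_divide[OF DERIV_ident dr]]) (use p eq in \<open>simp_all add: r_def\<close>)
qed

lemma pow_pred: "(r::real) \<noteq> 0 \<Longrightarrow> of_nat n * r ^ (n - 1) = of_nat n * r ^ n / r"
  by (cases n) simp_all

lemma alg_hom:
  fixes r X P K K' n N :: real
  assumes rp: "0 < r" and r2: "r * r = 1 + X * X"
  shows "(1 + X * X) * (n * X * P / (r * r) * K + P * (K' * (1 / r ^ 3))) + (n - 2 * N) * X * (P * K)
     = (r * P) * ((1 + (-1) * (X / r)^2) * K' + 2 * (-1) * (N - n) * (X / r) * K)"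
proof -
  have x2: "X * X = r * r - 1" using r2 by simp
  have "(1 + (-1) * (X / r)^2) = 1 / (r * r)" using rp by (simp add: field_simps power2_eq_square x2)
  hence e: "(1 + (-1) * (X / r)^2) * K' = K' / (r * r)" by simp
  show ?thesis unfolding e r2[symmetric] using rp by (simp add: field_simps power3_eq_cube)
qed

lemma hom: "poly (hh N n) X = sqrt (1 + X^2) ^ n * poly (Rc (-1) N n) (X / sqrt (1 + X^2))"
proof (induction n arbitrary: X)
  case 0 show ?case by simp
next
  case (Suc n)
  define F where "F = (\<lambda>X. sqrt (1 + X^2) ^ n * poly (Rc (-1) N n) (X / sqrt (1 + X^2)))"
  have hF: "poly (hh N n) = F" using Suc.IH by (simp add: F_def fun_eq_iff)
  define r where "r = sqrt (1 + X^2)"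
  define y where "y = X / r"
  have rp: "0 < r" by (simp add: add_pos_nonneg r_def)
  have r2: "r * r = 1 + X * X" by (simp add: add_pos_nonneg r_def power2_eq_square[symmetric])
  have D1: "(F has_real_derivative (of_nat n * (X / r) * r ^ (n - 1)) * poly (Rc (-1) N n) y
      + r ^ n * (poly (pderiv (Rc (-1) N n)) y * (1 / r ^ 3))) (at X)"
    unfolding F_def r_def y_def
    by (rule DERIV_cong[OF DERIV_mult[OF DERIV_power[OF dr] DERIV_chain2[OF poly_DERIV dy]]]) (simp add: algebra_simps)
  have D2: "(F has_real_derivative poly (pderiv (hh N n)) X) (at X)"
    unfolding hF[symmetric] by (rule poly_DERIV)
  have pd: "poly (pderiv (hh N n)) X = (of_nat n * (X / r) * r ^ (n - 1)) * poly (Rc (-1) N n) y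
      + r ^ n * (poly (pderiv (Rc (-1) N n)) y * (1 / r ^ 3))"
    using DERIV_unique[OF D2 D1] .
  have ph: "poly (hh N n) X = r ^ n * poly (Rc (-1) N n) y"
    using hF by (simp add: F_def r_def y_def)
  have lhs: "poly (hh N (Suc n)) X = (1 + X * X) * poly (pderiv (hh N n)) X + (of_nat n - 2 * N) * X * poly (hh N n) X"
    by simp
  have pp: "of_nat n * (X / r) * r ^ (n - 1) = of_nat n * X * r ^ n / (r * r)"
    using pow_pred[of r n] rp by (simp add: field_simps)
  have pd': "poly (pderiv (hh N n)) X = of_nat n * X * r ^ n / (r * r) * poly (Rc (-1) N n) y
      + r ^ n * (poly (pderiv (Rc (-1) N n)) y * (1 / r ^ 3))"
    unfolding pd pp ..
  show ?case
    unfolding lhs pd' ph poly_Rc_Suc r_def[symmetric] y_def[symmetric] power_Suc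
    using alg_hom[OF rp r2, of n "r ^ n" "poly (Rc (-1) N n) y" "poly (pderiv (Rc (-1) N n)) y" N]
    by (simp add: y_def mult.assoc)
qed

lemma poly_map_of_real: "poly (map_poly of_real p) (of_real x :: complex) = of_real (poly p (x::real))"
  by (induction p) (simp_all add: map_poly_pCons)

lemma H_poly:
  fixes N x :: real
  assumes N: "N > 0"
  shows "carinena_H n N x = (-1) ^ n * poly (Rc (1/N) (real n - N - 1/2) n) x"
proof -
  have f: "(\<lambda>t. (1 + t\<^sup>2 / N) powr (real n - N - 1/2)) = (\<lambda>t. (1 + (1/N) * t^2) powr (real n - N - 1/2))"
    by simp
  have pos: "0 < 1 + (1/N) * t^2" for t
  proof -
    have "0 \<le> (1/N) * t^2" using N by simp
    thus ?thesis by linarith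
  qed
  have d: "(deriv ^^ n) (\<lambda>t. (1 + (1/N) * t^2) powr (real n - N - 1/2)) x
     = poly (Rc (1/N) (real n - N - 1/2) n) x * (1 + (1/N) * x^2) powr (real n - N - 1/2 - real n)"
    by (rule deriv_Rc[where S=UNIV]) (rule open_UNIV, rule pos, simp)
  define u where "u = 1 + x^2 / N"
  have u: "u > 0" using N by (simp add: u_def add_pos_nonneg)
  have "u powr (N + 1/2) * u powr (real n - N - 1/2 - real n) = u powr ((N + 1/2) + (real n - N - 1/2 - real n))"
    by (rule powr_add[symmetric])
  also have "\<dots> = 1" using u by simp
  finally have uu: "u powr (N + 1/2) * u powr (real n - N - 1/2 - real n) = 1" .
  show ?thesis unfolding carinena_H_def f d
    using uu by (simp add: u_def)
qed

lemma C_val: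
  fixes \<nu> N y :: real
  assumes hN: "N = real n + \<nu> - 1/2" and y: "0 < 1 - y\<^sup>2 / \<nu>"
  shows "carinena_C n \<nu> y = (-1) ^ n * poly (Rc (-1/\<nu>) N n) y"
proof -
  define c where "c = -1/\<nu>"
  have f: "(\<lambda>t. (1 - t\<^sup>2 / \<nu>) powr (real n + \<nu> - 1/2)) = (\<lambda>t. (1 + c * t^2) powr N)"
    by (simp add: hN c_def)
  define S where "S = {t::real. 0 < 1 + c * t^2}"
  have S: "open S" unfolding S_def
    by (rule open_Collect_less) (auto intro!: continuous_intros)
  have yS: "y \<in> S" using y by (simp add: S_def c_def)
  have d: "(deriv ^^ n) (\<lambda>t. (1 + c * t^2) powr N) y
     = poly (Rc c N n) y * (1 + c * y^2) powr (N - real n)"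
    by (rule deriv_Rc[OF S _ yS]) (simp add: S_def)
  define u where "u = 1 - y^2 / \<nu>"
  have u: "u > 0" using y by (simp add: u_def)
  have "u powr (1/2 - \<nu>) * u powr (N - real n) = u powr ((1/2 - \<nu>) + (N - real n))"
    by (rule powr_add[symmetric])
  also have "\<dots> = 1" using u by (simp add: hN)
  finally have uu: "u powr (1/2 - \<nu>) * u powr (N - real n) = 1" .
  show ?thesis unfolding carinena_C_def f d
    using uu by (simp add: u_def c_def)
qed

lemma C_poly:
  fixes \<nu> N :: real
  assumes hN: "N = real n + \<nu> - 1/2" and nz: "\<nu> \<noteq> 0"
  shows "carinena_C_poly n \<nu> = smult ((-1) ^ n) (Rc (-1/\<nu>) N n)"
  unfolding carinena_C_poly_def
proof (rule the_equality)
  show "\<forall>Y. 0 < 1 - Y\<^sup>2 / \<nu> \<longrightarrow> poly (smult ((- 1) ^ n) (Rc (- 1 / \<nu>) N n)) Y = carinena_C n \<nu> Y"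
    using C_val[OF hN] by simp
next
  fix p assume p: "\<forall>Y. 0 < 1 - Y\<^sup>2 / \<nu> \<longrightarrow> poly p Y = carinena_C n \<nu> Y"
  define q where "q = p - smult ((- 1) ^ n) (Rc (- 1 / \<nu>) N n)"
  define b where "b = sqrt \<bar>\<nu>\<bar>"
  have b: "b > 0" using nz by (simp add: b_def)
  have sub: "{0<..<b} \<subseteq> {x. poly q x = 0}"
  proof
    fix Y assume Y: "Y \<in> {0<..<b}"
    have "Y^2 < b^2" using Y b by (intro power_strict_mono) auto
    hence Y2: "Y^2 < \<bar>\<nu>\<bar>" using b by (simp add: b_def)
    have "0 < 1 - Y\<^sup>2 / \<nu>"
    proof (cases "\<nu> > 0")
      case True thus ?thesis using Y2 by (simp add: field_simps)
    next
      case False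
      hence "\<nu> < 0" using nz by simp
      hence "Y^2 / \<nu> \<le> 0" by (simp add: divide_nonneg_neg)
      thus ?thesis by simp
    qed
    thus "Y \<in> {x. poly q x = 0}" using p C_val[OF hN] by (simp add: q_def)
  qed
  have "q = 0"
  proof (rule ccontr)
    assume "q \<noteq> 0"
    hence "finite {x. poly q x = 0}" by (rule poly_roots_finite)
    hence "finite {0<..<b}" using sub finite_subset by blast
    thus False using infinite_Ioo[OF b] by simp
  qed
  thus "p = smult ((- 1) ^ n) (Rc (- 1 / \<nu>) N n)" by (simp add: q_def)
qed

lemma csqrt_div:
  fixes \<nu> N :: real
  assumes N: "N > 0"
  shows "csqrt (complex_of_real (\<nu> / N)) = csqrt (complex_of_real \<nu>) / complex_of_real (sqrt N)"
  apply (subst csqrt_of_real')+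
  using N by (simp add: real_sqrt_divide abs_div divide_nonneg_pos divide_nonpos_pos zero_le_divide_iff)

theorem theorem3:
  fixes N \<nu> X :: real and n :: nat
  assumes "N > 0"
    and "\<nu> = N + 1/2 - real n"
    and "\<nu> \<noteq> 0"
    and "pochhammer (\<nu> + 1/2) n \<noteq> 0"
  shows "complex_of_real (carinena_H n N (X * sqrt N)) =
     complex_of_real (carinena_alpha n \<nu> * fact n)
     * csqrt (complex_of_real (\<nu> / N)) ^ n
     * complex_of_real ((1 + X\<^sup>2) powr (real n / 2))
     * poly (map_poly complex_of_real (carinena_C_poly n \<nu>))
         (complex_of_real X * csqrt (complex_of_real \<nu>) / complex_of_real (sqrt (1 + X\<^sup>2)))"
proof -
  note N = assms(1) and hnu = assms(2) and nz = assms(3) and pz = assms(4)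
  define a where "a = real n - N - 1/2"
  define r where "r = sqrt (1 + X^2)"
  define y where "y = X / r"
  define G where "G = poly (Rc 1 a n) X"
  define K where "K = poly (Rc (-1) N n) y"
  define p1 where "p1 = pochhammer (\<nu> + 1/2) n"
  define p2 where "p2 = pochhammer (2 * \<nu>) n"
  have rp: "r > 0" by (simp add: r_def add_pos_nonneg)
  have sNp: "sqrt N > 0" using N by simp
  have sc1: "poly (Rc 1 a n) X = sqrt N ^ n * poly (Rc (1/N) a n) (sqrt N * X)"
    using scaling_eval[of "1/N" "sqrt N" a n X] N by simp
  have L: "carinena_H n N (X * sqrt N) = (-1)^n * G / sqrt N ^ n"
    unfolding H_poly[OF N] a_def[symmetric] G_def sc1 using sNp by (simp add: mult.commute)
  have D: "2 ^ n * p1 * G = p2 * poly (hh N n) X"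
  proof -
    have "poly (KK (2 ^ n * pochhammer (N + 1 - of_nat n) n) * Rc 1 (of_nat n - N - 1/2) n) X
       = poly (KK (pochhammer (2 * N + 1 - 2 * of_nat n) n) * hh N n) X"
      by (simp only: Dn_real)
    moreover have "N + 1 - of_nat n = \<nu> + 1/2" "2 * N + 1 - 2 * of_nat n = 2 * \<nu>" using hnu by simp_all
    ultimately show ?thesis by (simp add: G_def p1_def p2_def a_def)
  qed
  have hm: "poly (hh N n) X = r ^ n * K" unfolding K_def y_def r_def by (rule hom)
  have Gv: "G = p2 / (2 ^ n * p1) * r ^ n * K"
    using D hm pz by (simp add: p1_def field_simps)
  have al: "carinena_alpha n \<nu> * fact n = p2 / (2 ^ n * p1)"
    by (simp add: carinena_alpha_def p1_def p2_def)
  have hN: "N = real n + \<nu> - 1/2" using hnu by simp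
  define s where "s = csqrt (complex_of_real \<nu>)"
  have s0: "s \<noteq> 0" using nz by (simp add: s_def)
  have s2: "complex_of_real (-1/\<nu>) * s^2 = -1" using nz by (simp add: s_def)
  interpret o: rh "of_real :: real \<Rightarrow> complex" by (rule rh_of_real)
  have mp: "map_poly complex_of_real (carinena_C_poly n \<nu>) = smult ((-1)^n) (Rc (complex_of_real (-1/\<nu>)) (complex_of_real N) n)"
    unfolding C_poly[OF hN nz] by (simp add: map_poly_smult o.mp_Rc)
  have sc2: "poly (Rc (complex_of_real (-1/\<nu>) * s^2) (complex_of_real N) n) (complex_of_real y)
      = s ^ n * poly (Rc (complex_of_real (-1/\<nu>)) (complex_of_real N) n) (s * complex_of_real y)"
    by (rule scaling_eval)
  have Kc: "poly (Rc (-1) (complex_of_real N) n) (complex_of_real y) = complex_of_real K"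
  proof -
    have "Rc (-1) (complex_of_real N) n = map_poly complex_of_real (Rc (-1) N n)"
      by (simp add: o.mp_Rc)
    thus ?thesis by (simp add: K_def poly_map_of_real)
  qed
  have z: "complex_of_real X * s / complex_of_real r = s * complex_of_real y"
    by (simp add: y_def)
  have PR: "poly (map_poly complex_of_real (carinena_C_poly n \<nu>)) (complex_of_real X * s / complex_of_real r)
      = (-1)^n * complex_of_real K / s ^ n"
    unfolding mp z using sc2 s0 unfolding s2 Kc by (simp add: field_simps)
  have pw: "(1 + X\<^sup>2) powr (real n / 2) = r ^ n"
  proof -
    have "(1 + X\<^sup>2) powr (real n / 2) = ((1 + X\<^sup>2) powr (1/2)) powr real n"
      by (simp add: powr_powr)
    also have "\<dots> = r ^ n" using rp by (simp add: powr_half_sqrt add_pos_nonneg r_def powr_realpow)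
    finally show ?thesis .
  qed
  have cs: "csqrt (complex_of_real (\<nu> / N)) = s / complex_of_real (sqrt N)"
    unfolding s_def by (rule csqrt_div[OF N])
  show ?thesis
    unfolding L al cs pw r_def[symmetric] s_def[symmetric] PR Gv
    using s0 sNp by (simp add: field_simps power_divide)
qed

end
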